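(* Let $C$ be a boundedly compact subset of a metric space $(X,d)$, $T:C\to C$ continuous with $F:=\mathrm{Fix}(T)\ne\emptyset$, and $G,H:\mathbb{R}_+\to\mathbb{R}_+$ satisfying properties (G) and (H). Assume that the sequence $(x_n)$ in $C$ is bounded, $(G,H)$-Fej\'er monotone with respect to $F$, and has approximate fixed points. Then $(x_n)$ converges to a fixed point of $T$. The same conclusion holds if the continuity of $T$ is replaced by the assumption that $F$ is explicitly closed with respect to the representation $\tilde F_k:=\{x\in C\mid d(x,Tx)\le\frac1{k+1}\}$.
   Context: $C$ is boundedly compact if every bounded sequence in $C$ has a subsequence converging in $C$. Property (G): $a_n\to0\Rightarrow G(a_n)\to0$; property (H): $H(a_n)\to0\Rightarrow a_n\to0$ (for all sequences in $\mathbb{R}_+$). $(x_n)$ is $(G,H)$-Fej\'er monotone w.r.t. $F$ if $H(d(x_{n+m},p))\le G(d(x_n,p))$ for all $n,m\in\mathbb{N}$, $p\in F$. $(x_n)$ has approximate fixed points if for every $k$ there is $N$ with $d(x_N,Tx_N)\le\frac1{k+1}$. With $AF_k:=\bigcap_{l\le k}\tilde F_l$, $F$ is explicitly closed if for every $p\in C$: if $AF_M\cap\overline B(p,1/(N+1))\ne\emptyset$ for all $N,M$, then $p\in F$. *)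

theory Defs
  imports "HOL-Analysis.Analysis"
begin

definition boundedly_compact :: "'a::metric_space set \<Rightarrow> bool" where
  "boundedly_compact C \<longleftrightarrow>
     (\<forall>x::nat \<Rightarrow> 'a. (\<forall>n. x n \<in> C) \<and> bounded (range x) \<longrightarrow>
        (\<exists>r l. strict_mono r \<and> l \<in> C \<and> (x \<circ> r) \<longlonglongrightarrow> l))"

definition property_G :: "(real \<Rightarrow> real) \<Rightarrow> bool" where
  "property_G G \<longleftrightarrow>
     (\<forall>a::nat \<Rightarrow> real. (\<forall>n. a n \<ge> 0) \<longrightarrow> a \<longlonglongrightarrow> 0 \<longrightarrow> (\<lambda>n. G (a n)) \<longlonglongrightarrow> 0)"

definition property_H :: "(real \<Rightarrow> real) \<Rightarrow> bool" where
  "property_H H \<longleftrightarrow>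
     (\<forall>a::nat \<Rightarrow> real. (\<forall>n. a n \<ge> 0) \<longrightarrow> (\<lambda>n. H (a n)) \<longlonglongrightarrow> 0 \<longrightarrow> a \<longlonglongrightarrow> 0)"

definition GH_fejer_monotone ::
  "(real \<Rightarrow> real) \<Rightarrow> (real \<Rightarrow> real) \<Rightarrow> (nat \<Rightarrow> 'a::metric_space) \<Rightarrow> 'a set \<Rightarrow> bool" where
  "GH_fejer_monotone G H x F \<longleftrightarrow>
     (\<forall>n m p. p \<in> F \<longrightarrow> H (dist (x (n + m)) p) \<le> G (dist (x n) p))"

definition has_approx_fixed_points :: "('a::metric_space \<Rightarrow> 'a) \<Rightarrow> (nat \<Rightarrow> 'a) \<Rightarrow> bool" where
  "has_approx_fixed_points T x \<longleftrightarrow>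
     (\<forall>k::nat. \<exists>N. dist (x N) (T (x N)) \<le> 1 / (real k + 1))"

definition approx_fix_set :: "'a::metric_space set \<Rightarrow> ('a \<Rightarrow> 'a) \<Rightarrow> nat \<Rightarrow> 'a set" where
  "approx_fix_set C T k = {x \<in> C. dist x (T x) \<le> 1 / (real k + 1)}"

definition AF :: "'a::metric_space set \<Rightarrow> ('a \<Rightarrow> 'a) \<Rightarrow> nat \<Rightarrow> 'a set" where
  "AF C T k = (\<Inter>l\<in>{..k}. approx_fix_set C T l)"

definition explicitly_closed :: "'a::metric_space set \<Rightarrow> ('a \<Rightarrow> 'a) \<Rightarrow> 'a set \<Rightarrow> bool" where
  "explicitly_closed C T F \<longleftrightarrow>
     (\<forall>p\<in>C. (\<forall>N M::nat. AF C T M \<inter> cball p (1 / (real N + 1)) \<noteq> {}) \<longrightarrow> p \<in> F)"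

end

theory Submission
  imports Defs
begin

theorem proposition7p3:
  fixes C :: "'a::metric_space set" and T :: "'a \<Rightarrow> 'a"
    and G H :: "real \<Rightarrow> real" and x :: "nat \<Rightarrow> 'a"
  assumes bc: "boundedly_compact C"
    and TC: "T ` C \<subseteq> C"
    and Fne: "{p \<in> C. T p = p} \<noteq> {}"
    and Gnn: "\<forall>t\<ge>0. G t \<ge> 0" and Hnn: "\<forall>t\<ge>0. H t \<ge> 0"
    and G: "property_G G" and H: "property_H H"
    and xC: "\<forall>n. x n \<in> C"
    and xb: "bounded (range x)"
    and fej: "GH_fejer_monotone G H x {p \<in> C. T p = p}"
    and afp: "has_approx_fixed_points T x"
    and cont_or_ec: "continuous_on C T \<or> explicitly_closed C T {p \<in> C. T p = p}"
  shows "\<exists>p \<in> {p \<in> C. T p = p}. x \<longlonglongrightarrow> p"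
proof -
  obtain N where N: "\<And>k. dist (x (N k)) (T (x (N k))) \<le> 1 / (real k + 1)"
    using afp unfolding has_approx_fixed_points_def by metis
  have "bounded (range (x \<circ> N))"
    by (rule bounded_subset[OF xb]) auto
  then obtain r p where r: "strict_mono r" and pC: "p \<in> C" and lim: "(x \<circ> N \<circ> r) \<longlonglongrightarrow> p"
    using bc xC unfolding boundedly_compact_def by (metis comp_apply)
  define y where "y = x \<circ> N \<circ> r"
  have ylim: "y \<longlonglongrightarrow> p" using lim y_def by simp
  have yC: "\<And>j. y j \<in> C" using xC y_def by simp
  have ydist: "dist (y j) (T (y j)) \<le> 1 / (real l + 1)" if "l \<le> j" for j l
  proof -
    have "l \<le> r j" using seq_suble[OF r, of j] that by simp
    hence "1 / (real (r j) + 1) \<le> 1 / (real l + 1)" by (simp add: frac_le)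
    thus ?thesis using N[of "r j"] y_def by simp
  qed
  have Tp: "T p = p"
    using cont_or_ec
  proof
    assume c: "continuous_on C T"
    have "(\<lambda>j. T (y j)) \<longlonglongrightarrow> T p"
      by (rule continuous_on_tendsto_compose[OF c ylim pC]) (use yC in auto)
    hence l1: "(\<lambda>j. dist (y j) (T (y j))) \<longlonglongrightarrow> dist p (T p)"
      using ylim by (intro tendsto_dist)
    have l2: "(\<lambda>j. dist (y j) (T (y j))) \<longlonglongrightarrow> 0"
    proof (rule tendsto_sandwich[of "\<lambda>_. 0" _ _ "\<lambda>j. 1 / (real j + 1)"])
      show "\<forall>\<^sub>F n in sequentially. 0 \<le> dist (y n) (T (y n))" by simp
      show "\<forall>\<^sub>F n in sequentially. dist (y n) (T (y n)) \<le> 1 / (real n + 1)"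
        using ydist by simp
      show "(\<lambda>_. 0::real) \<longlonglongrightarrow> 0" by simp
      show "(\<lambda>j. 1 / (real j + 1)) \<longlonglongrightarrow> 0" using LIMSEQ_inverse_real_of_nat by (simp add: inverse_eq_divide add.commute)
    qed
    from LIMSEQ_unique[OF l1 l2] show "T p = p" by simp
  next
    assume ec: "explicitly_closed C T {p \<in> C. T p = p}"
    have "AF C T M \<inter> cball p (1 / (real N0 + 1)) \<noteq> {}" for N0 M
    proof -
      have "eventually (\<lambda>j. dist (y j) p < 1 / (real N0 + 1)) sequentially"
        using ylim unfolding tendsto_iff by (auto)
      then obtain j0 where j0: "\<And>j. j \<ge> j0 \<Longrightarrow> dist (y j) p < 1 / (real N0 + 1)"
        unfolding eventually_sequentially by blast
      define j where "j = max j0 M"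
      have "y j \<in> AF C T M"
        unfolding AF_def approx_fix_set_def using yC ydist j_def by auto
      moreover have "y j \<in> cball p (1 / (real N0 + 1))"
        using j0[of j] j_def by (simp add: dist_commute)
      ultimately show ?thesis by blast
    qed
    thus "T p = p" using ec pC unfolding explicitly_closed_def by blast
  qed
  have key: "(\<lambda>j. dist (x (m j)) p) \<longlonglongrightarrow> 0" if m: "\<And>j. m j \<ge> N (r j)" for m
  proof -
    have d0: "(\<lambda>j. dist (y j) p) \<longlonglongrightarrow> 0" using ylim tendsto_dist_iff by blast
    have g0: "(\<lambda>j. G (dist (y j) p)) \<longlonglongrightarrow> 0"
      using G d0 unfolding property_G_def by auto
    have hle: "H (dist (x (m j)) p) \<le> G (dist (y j) p)" for j
    proof -
      have "H (dist (x (N (r j) + (m j - N (r j)))) p) \<le> G (dist (x (N (r j))) p)"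
        using fej pC Tp unfolding GH_fejer_monotone_def by blast
      thus ?thesis using m[of j] y_def by simp
    qed
    have "(\<lambda>j. H (dist (x (m j)) p)) \<longlonglongrightarrow> 0"
    proof (rule tendsto_sandwich[of "\<lambda>_. 0" _ _ "\<lambda>j. G (dist (y j) p)"])
      show "\<forall>\<^sub>F n in sequentially. 0 \<le> H (dist (x (m n)) p)" using Hnn by simp
      show "\<forall>\<^sub>F n in sequentially. H (dist (x (m n)) p) \<le> G (dist (y n) p)" using hle by simp
    qed (use g0 in auto)
    thus ?thesis using H unfolding property_H_def by auto
  qed
  have "x \<longlonglongrightarrow> p"
  proof (rule ccontr)
    assume "\<not> x \<longlonglongrightarrow> p"
    then obtain e where e: "e > 0" and ex: "\<forall>n0. \<exists>n\<ge>n0. \<not> dist (x n) p < e"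
      unfolding LIMSEQ_def by auto
    hence "\<forall>j. \<exists>n. n \<ge> N (r j) \<and> \<not> dist (x n) p < e" by blast
    then obtain m where "\<forall>j. m j \<ge> N (r j) \<and> \<not> dist (x (m j)) p < e"
      by (rule choice[THEN exE]) blast
    hence m: "\<And>j. m j \<ge> N (r j)" and md: "\<And>j. \<not> dist (x (m j)) p < e" by auto
    have "(\<lambda>j. dist (x (m j)) p) \<longlonglongrightarrow> 0" by (rule key[OF m])
    then obtain j0 where "\<And>j. j \<ge> j0 \<Longrightarrow> dist (dist (x (m j)) p) 0 < e"
      using e unfolding LIMSEQ_def by blast
    thus False using md[of j0] by auto
  qed
  thus ?thesis using pC Tp by blast
qed

end
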